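(* Let $X,Y$ be Banach spaces over $\mathbb{K}\in\{\mathbb{R},\mathbb{C}\}$ and let $G\in L(X,Y)$ with $\|G\|=1$. Then for each $T\in L(X,Y)$ the following are equivalent: (i) $\max_{\omega\in S^1}\|G+\omega T\|_G = 1+\|T\|_G$; (ii) $\nu_G(T)=\|T\|_G$.
   Context: $S^1=\{\lambda\in\mathbb{K}:|\lambda|=1\}$; $S_X$ is the unit sphere of $X$, $Y^*$ the dual of $Y$. For $T\in L(X,Y)$: $\|T\|_G := \inf_{\delta>0}\sup\{\|Tx\|: x\in S_X,\ \|Gx\|>1-\delta\}$; $V_G(T):=\bigcap_{\delta>0}\overline{\{y^*(Tx): x\in S_X,\ y^*\in S_{Y^*},\ \operatorname{Re} y^*(Gx)>1-\delta\}}$ and $\nu_G(T):=\max\{|\lambda|:\lambda\in V_G(T)\}$. Standing assumption of the paper: $\|\cdot\|_G$ is a norm on $L(X,Y)$. *)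

theory Defs
  imports "HOL-Analysis.Analysis"
begin

class complex_vector_sp = real_vector +
  fixes scaleC :: "complex \<Rightarrow> 'a \<Rightarrow> 'a"
  assumes scaleC_add_right: "scaleC a (x + y) = scaleC a x + scaleC a y"
    and scaleC_add_left: "scaleC (a + b) x = scaleC a x + scaleC b x"
    and scaleC_scaleC: "scaleC a (scaleC b x) = scaleC (a * b) x"
    and scaleC_one: "scaleC 1 x = x"
    and scaleR_scaleC: "scaleR r x = scaleC (complex_of_real r) x"

class complex_normed_vector_sp = complex_vector_sp + real_normed_vector +
  assumes norm_scaleC: "norm (scaleC a x) = cmod a * norm x"

class complex_banach_sp = complex_normed_vector_sp + complete_space

definition cbounded_linear ::
  "('a::complex_normed_vector_sp \<Rightarrow> 'b::complex_normed_vector_sp) \<Rightarrow> bool" where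
  "cbounded_linear T \<longleftrightarrow> bounded_linear T \<and> (\<forall>c x. T (scaleC c x) = scaleC c (T x))"

definition cdual_sphere :: "('b::complex_normed_vector_sp \<Rightarrow> complex) set" where
  "cdual_sphere = {f. bounded_linear f \<and> (\<forall>c x. f (scaleC c x) = c * f x) \<and> onorm f = 1}"

definition rdual_sphere :: "('b::real_normed_vector \<Rightarrow> real) set" where
  "rdual_sphere = {f. bounded_linear f \<and> onorm f = 1}"

definition normG :: "('a::real_normed_vector \<Rightarrow> 'b::real_normed_vector) \<Rightarrow> ('a \<Rightarrow> 'b) \<Rightarrow> real" where
  "normG G T = (INF \<delta>\<in>{0<..}. SUP x\<in>{x. norm x = 1 \<and> norm (G x) > 1 - \<delta>}. norm (T x))"

definition numrange ::
  "('b \<Rightarrow> 'k::real_normed_vector) set \<Rightarrow> ('k \<Rightarrow> real) \<Rightarrow>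
   ('a::real_normed_vector \<Rightarrow> 'b::real_normed_vector) \<Rightarrow> ('a \<Rightarrow> 'b) \<Rightarrow> 'k set" where
  "numrange D re G T = (\<Inter>\<delta>\<in>{0<..}. closure
      {y (T x) | x y. norm x = 1 \<and> y \<in> D \<and> re (y (G x)) > 1 - \<delta>})"

definition VG_real :: "('a::real_normed_vector \<Rightarrow> 'b::real_normed_vector) \<Rightarrow> ('a \<Rightarrow> 'b) \<Rightarrow> real set" where
  "VG_real G T = numrange rdual_sphere (\<lambda>r. r) G T"

definition VG_complex ::
  "('a::complex_normed_vector_sp \<Rightarrow> 'b::complex_normed_vector_sp) \<Rightarrow> ('a \<Rightarrow> 'b) \<Rightarrow> complex set" where
  "VG_complex G T = numrange cdual_sphere Re G T"

text \<open>Numerical radius: the maximum of |lambda| over the (compact) range, written as a supremum.\<close>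
definition nuG_real :: "('a::real_normed_vector \<Rightarrow> 'b::real_normed_vector) \<Rightarrow> ('a \<Rightarrow> 'b) \<Rightarrow> real" where
  "nuG_real G T = Sup (abs ` VG_real G T)"

definition nuG_complex ::
  "('a::complex_normed_vector_sp \<Rightarrow> 'b::complex_normed_vector_sp) \<Rightarrow> ('a \<Rightarrow> 'b) \<Rightarrow> real" where
  "nuG_complex G T = Sup (cmod ` VG_complex G T)"

end

theory Submission
  imports Defs
begin


definition sublin :: "('a::real_vector \<Rightarrow> real) \<Rightarrow> bool" where
  "sublin q \<longleftrightarrow> (\<forall>x y. q (x + y) \<le> q x + q y) \<and> (\<forall>c x. c \<ge> 0 \<longrightarrow> q (c *\<^sub>R x) = c * q x)"

lemma sublin_zero: "sublin q \<Longrightarrow> q 0 = 0"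
  unfolding sublin_def by (metis mult_zero_left order_refl scaleR_zero_left)

lemma sublin_neg: "sublin q \<Longrightarrow> - q (- x) \<le> q x"
proof -
  assume s: "sublin q"
  have "q (x + - x) \<le> q x + q (-x)" using s unfolding sublin_def by blast
  then show ?thesis using sublin_zero[OF s] by simp
qed

definition shiftinf :: "('a::real_vector \<Rightarrow> real) \<Rightarrow> 'a \<Rightarrow> 'a \<Rightarrow> real" where
  "shiftinf q z x = (INF t\<in>{0..}. q (x + t *\<^sub>R z) - t * q z)"

lemma shiftinf_bdd:
  assumes s: "sublin q"
  shows "bdd_below ((\<lambda>t. q (x + t *\<^sub>R z) - t * q z) ` {0..})"
proof (rule bdd_belowI2)
  fix t :: real assume "t \<in> {0..}"
  then have t: "t \<ge> 0" by simp
  have "q (t *\<^sub>R z) \<le> q (x + t *\<^sub>R z) + q (- x)"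
    using s unfolding sublin_def by (metis add.commute diff_add_cancel diff_conv_add_uminus)
  then show "- q (- x) \<le> q (x + t *\<^sub>R z) - t * q z"
    using s t unfolding sublin_def by simp
qed

lemma shiftinf_le:
  assumes s: "sublin q" and t: "t \<ge> 0"
  shows "shiftinf q z x \<le> q (x + t *\<^sub>R z) - t * q z"
  unfolding shiftinf_def by (rule cINF_lower[OF shiftinf_bdd[OF s]]) (use t in auto)

lemma shiftinf_ge:
  assumes "\<And>t. t \<ge> 0 \<Longrightarrow> a \<le> q (x + t *\<^sub>R z) - t * q z"
  shows "a \<le> shiftinf q z x"
  unfolding shiftinf_def by (rule cINF_greatest) (use assms in auto)

lemma shiftinf_below: "sublin q \<Longrightarrow> shiftinf q z x \<le> q x"
  using shiftinf_le[of q 0 z x] by simp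

lemma shiftinf_sublin:
  assumes s: "sublin q"
  shows "sublin (shiftinf q z)"
  unfolding sublin_def
proof (intro conjI allI impI)
  fix x y
  have sub: "\<And>a b. q (a + b) \<le> q a + q b" and hom: "\<And>c a. c \<ge> 0 \<Longrightarrow> q (c *\<^sub>R a) = c * q a"
    using s unfolding sublin_def by auto
  have key: "shiftinf q z (x + y) \<le> (q (x + s *\<^sub>R z) - s * q z) + (q (y + t *\<^sub>R z) - t * q z)"
    if "s \<ge> 0" "t \<ge> 0" for s t
  proof -
    have "shiftinf q z (x + y) \<le> q ((x + y) + (s + t) *\<^sub>R z) - (s + t) * q z"
      by (rule shiftinf_le[OF s]) (use that in simp)
    also have "(x + y) + (s + t) *\<^sub>R z = (x + s *\<^sub>R z) + (y + t *\<^sub>R z)"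
      by (simp add: algebra_simps)
    also have "q \<dots> - (s + t) * q z \<le> (q (x + s *\<^sub>R z) - s * q z) + (q (y + t *\<^sub>R z) - t * q z)"
      using sub[of "x + s *\<^sub>R z" "y + t *\<^sub>R z"] by (simp add: algebra_simps)
    finally show ?thesis .
  qed
  have "shiftinf q z (x + y) - shiftinf q z x \<le> q (y + t *\<^sub>R z) - t * q z" if t: "t \<ge> 0" for t
  proof -
    have "shiftinf q z (x + y) - (q (y + t *\<^sub>R z) - t * q z) \<le> shiftinf q z x"
      by (rule shiftinf_ge) (use key t in force)
    then show ?thesis by simp
  qed
  then have "shiftinf q z (x + y) - shiftinf q z x \<le> shiftinf q z y"
    by (rule shiftinf_ge)
  then show "shiftinf q z (x + y) \<le> shiftinf q z x + shiftinf q z y" by simp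
next
  fix c :: real and x assume c: "c \<ge> 0"
  have hom: "\<And>c a. c \<ge> 0 \<Longrightarrow> q (c *\<^sub>R a) = c * q a"
    using s unfolding sublin_def by auto
  show "shiftinf q z (c *\<^sub>R x) = c * shiftinf q z x"
  proof (cases "c = 0")
    case True
    have "shiftinf q z 0 = 0"
    proof (rule antisym)
      show "shiftinf q z 0 \<le> 0" using shiftinf_le[OF s, of 0 z 0] sublin_zero[OF s] by simp
      show "0 \<le> shiftinf q z 0" by (rule shiftinf_ge) (simp add: hom)
    qed
    then show ?thesis using True by simp
  next
    case False
    with c have c: "c > 0" by simp
    have 1: "shiftinf q z (c *\<^sub>R x) / c \<le> shiftinf q z x"
    proof (rule shiftinf_ge)
      fix t :: real assume t: "t \<ge> 0"
      have "shiftinf q z (c *\<^sub>R x) \<le> q (c *\<^sub>R x + (c * t) *\<^sub>R z) - (c * t) * q z"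
        by (rule shiftinf_le[OF s]) (use c t in simp)
      also have "c *\<^sub>R x + (c * t) *\<^sub>R z = c *\<^sub>R (x + t *\<^sub>R z)" by (simp add: algebra_simps)
      also have "q (c *\<^sub>R (x + t *\<^sub>R z)) = c * q (x + t *\<^sub>R z)" using hom c by simp
      finally have h: "shiftinf q z (c *\<^sub>R x) \<le> c * (q (x + t *\<^sub>R z) - t * q z)"
        by (simp add: algebra_simps)
      show "shiftinf q z (c *\<^sub>R x) / c \<le> q (x + t *\<^sub>R z) - t * q z"
        using h c by (simp add: pos_divide_le_eq mult.commute)
    qed
    have 2: "c * shiftinf q z x \<le> shiftinf q z (c *\<^sub>R x)"
    proof (rule shiftinf_ge)
      fix t :: real assume t: "t \<ge> 0"
      have "shiftinf q z x \<le> q (x + (t / c) *\<^sub>R z) - (t / c) * q z"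
        by (rule shiftinf_le[OF s]) (use c t in simp)
      then have "c * shiftinf q z x \<le> c * (q (x + (t / c) *\<^sub>R z) - (t / c) * q z)"
        using mult_left_mono[OF _ less_imp_le[OF c]] by blast
      also have "\<dots> = c * q (x + (t / c) *\<^sub>R z) - t * q z" using c by (simp add: algebra_simps)
      also have "c * q (x + (t / c) *\<^sub>R z) = q (c *\<^sub>R (x + (t / c) *\<^sub>R z))" using hom c by simp
      also have "c *\<^sub>R (x + (t / c) *\<^sub>R z) = c *\<^sub>R x + t *\<^sub>R z" using c by (simp add: algebra_simps)
      finally show "c * shiftinf q z x \<le> q (c *\<^sub>R x + t *\<^sub>R z) - t * q z" .
    qed
    show ?thesis using 1 2 c by (simp add: divide_le_eq mult.commute antisym)
  qed
qed

lemma minimal_sublin_linear: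
  assumes s: "sublin q" and mini: "\<And>r. sublin r \<Longrightarrow> (\<forall>x. r x \<le> q x) \<Longrightarrow> r = q"
  shows "q (x + y) = q x + q y" "q (c *\<^sub>R x) = c * q x"
proof -
  have odd: "q (- z) = - q z" for z
  proof -
    have "shiftinf q z = q"
      by (rule mini[OF shiftinf_sublin[OF s]]) (use shiftinf_below[OF s] in auto)
    then have "q (- z) = shiftinf q z (- z)" by simp
    also have "\<dots> \<le> q (- z + 1 *\<^sub>R z) - 1 * q z" by (rule shiftinf_le[OF s]) simp
    finally have "q (- z) \<le> - q z" using sublin_zero[OF s] by simp
    moreover have "- q z \<le> q (- z)" using sublin_neg[OF s, of "- z"] by simp
    ultimately show ?thesis by simp
  qed
  have sub: "\<And>a b. q (a + b) \<le> q a + q b" and hom: "\<And>c a. c \<ge> 0 \<Longrightarrow> q (c *\<^sub>R a) = c * q a"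
    using s unfolding sublin_def by auto
  have "q x \<le> q (x + y) + q (- y)" using sub[of "x + y" "- y"] by simp
  then show "q (x + y) = q x + q y" using sub[of x y] odd[of y] by simp
  show "q (c *\<^sub>R x) = c * q x"
  proof (cases "c \<ge> 0")
    case True then show ?thesis using hom by simp
  next
    case False
    then have "q (c *\<^sub>R x) = q (- ((- c) *\<^sub>R x))" by simp
    also have "\<dots> = - ((- c) * q x)" using odd hom[of "- c" x] False by simp
    finally show ?thesis by simp
  qed
qed

lemma po_lemma:
  fixes A :: "('a \<Rightarrow> real) set"
  defines "R \<equiv> {(q1, q2). q1 \<in> A \<and> q2 \<in> A \<and> (\<forall>x. q2 x \<le> q1 x)}"
  shows "Partial_order R" "Field R = A"
proof -
  show FR: "Field R = A" unfolding R_def Field_def by auto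
  show "Partial_order R"
    unfolding partial_order_on_def preorder_on_def refl_on_def trans_def antisym_def FR
  proof (intro conjI ballI allI impI)
    show "R \<subseteq> A \<times> A" unfolding R_def by auto
    show "\<And>x. x \<in> A \<Longrightarrow> (x, x) \<in> R" unfolding R_def by auto
    show "\<And>x y z. (x, y) \<in> R \<Longrightarrow> (y, z) \<in> R \<Longrightarrow> (x, z) \<in> R"
      unfolding R_def by (auto intro: order_trans)
    show "\<And>x y. (x, y) \<in> R \<Longrightarrow> (y, x) \<in> R \<Longrightarrow> x = y"
      unfolding R_def by (auto intro!: ext order.antisym)
  qed
qed

lemma exists_minimal_sublin:
  assumes p: "sublin p"
  shows "\<exists>m. sublin m \<and> (\<forall>x. m x \<le> p x) \<and> (\<forall>r. sublin r \<and> (\<forall>x. r x \<le> m x) \<longrightarrow> r = m)"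
proof -
  define A where "A = {q. sublin q \<and> (\<forall>x. q x \<le> p x)}"
  define R where "R = {(q1, q2). q1 \<in> A \<and> q2 \<in> A \<and> (\<forall>x. q2 x \<le> q1 x)}"
  have FR: "Field R = A" unfolding R_def by (rule po_lemma(2))
  have po: "Partial_order R" unfolding R_def by (rule po_lemma(1))
  have lb: "\<forall>x. - p (- x) \<le> q x" if "q \<in> A" for q
  proof
    fix x
    have "- p (- x) \<le> - q (- x)" using that unfolding A_def by auto
    also have "\<dots> \<le> q x" using sublin_neg that unfolding A_def by auto
    finally show "- p (- x) \<le> q x" .
  qed
  have ub: "\<exists>u\<in>Field R. \<forall>a\<in>C. (a, u) \<in> R" if C: "C \<in> Chains R" for C
  proof (cases "C = {}")
    case True
    have "p \<in> A" using p unfolding A_def by auto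
    then show ?thesis using True FR by auto
  next
    case ne: False
    have CA: "C \<subseteq> A"
    proof
      fix q assume "q \<in> C"
      then have "(q, q) \<in> R" using C unfolding Chains_def by blast
      then show "q \<in> A" unfolding R_def by blast
    qed
    have ch: "\<And>a b. a \<in> C \<Longrightarrow> b \<in> C \<Longrightarrow> (\<forall>x. a x \<le> b x) \<or> (\<forall>x. b x \<le> a x)"
      using C unfolding Chains_def R_def by blast
    define u where "u x = (INF q\<in>C. q x)" for x
    have bdd: "bdd_below ((\<lambda>q. q x) ` C)" for x
    proof (rule bdd_belowI2[where m="- p (- x)"])
      fix q assume "q \<in> C" then show "- p (- x) \<le> q x" using lb CA by blast
    qed
    have ule: "u x \<le> q x" if "q \<in> C" for q x
      unfolding u_def by (rule cINF_lower[OF bdd that])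
    have uge: "a \<le> u x" if "\<And>q. q \<in> C \<Longrightarrow> a \<le> q x" for a x
      unfolding u_def by (rule cINF_greatest[OF ne]) (use that in auto)
    have subq: "\<And>q a b. q \<in> C \<Longrightarrow> q (a + b) \<le> q a + q b"
      and homq: "\<And>q c a. q \<in> C \<Longrightarrow> c \<ge> 0 \<Longrightarrow> q (c *\<^sub>R a) = c * q a"
      using CA unfolding A_def sublin_def by auto
    have "sublin u"
      unfolding sublin_def
    proof (intro conjI allI impI)
      fix x y
      have key: "u (x + y) \<le> q1 x + q2 y" if "q1 \<in> C" "q2 \<in> C" for q1 q2
      proof (cases "\<forall>x. q1 x \<le> q2 x")
        case True
        have "u (x + y) \<le> q1 (x + y)" by (rule ule[OF that(1)])
        also have "\<dots> \<le> q1 x + q1 y" by (rule subq[OF that(1)])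
        also have "\<dots> \<le> q1 x + q2 y" using True by simp
        finally show ?thesis .
      next
        case False
        then have T: "\<forall>x. q2 x \<le> q1 x" using ch[OF that] by blast
        have "u (x + y) \<le> q2 (x + y)" by (rule ule[OF that(2)])
        also have "\<dots> \<le> q2 x + q2 y" by (rule subq[OF that(2)])
        also have "\<dots> \<le> q1 x + q2 y" using T by simp
        finally show ?thesis .
      qed
      have k2: "u (x + y) - q2 y \<le> u x" if q2: "q2 \<in> C" for q2
      proof (rule uge)
        fix q1 assume "q1 \<in> C" then show "u (x + y) - q2 y \<le> q1 x" using key[of q1 q2] q2 by simp
      qed
      have "u (x + y) - u x \<le> u y"
      proof (rule uge)
        fix q assume "q \<in> C" then show "u (x + y) - u x \<le> q y" using k2[of q] by linarith
      qed
      then show "u (x + y) \<le> u x + u y" by simp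
    next
      fix c :: real and x assume c: "c \<ge> 0"
      show "u (c *\<^sub>R x) = c * u x"
      proof (cases "c = 0")
        case True
        obtain q0 where q0: "q0 \<in> C" using ne by blast
        have "u 0 \<le> 0" using ule[OF q0, of 0] homq[OF q0, of 0 0] by simp
        moreover have "0 \<le> u 0"
        proof (rule uge)
          fix q assume "q \<in> C" then show "0 \<le> q 0" using homq[of q 0 0] by simp
        qed
        ultimately show ?thesis using True by simp
      next
        case False
        with c have c: "c > 0" by simp
        have 1: "u (c *\<^sub>R x) / c \<le> u x"
        proof (rule uge)
          fix q assume q: "q \<in> C"
          have "u (c *\<^sub>R x) \<le> q (c *\<^sub>R x)" by (rule ule[OF q])
          also have "\<dots> = q x * c" using homq[OF q] c by simp
          finally show "u (c *\<^sub>R x) / c \<le> q x" using c by (simp add: pos_divide_le_eq)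
        qed
        have 2: "c * u x \<le> u (c *\<^sub>R x)"
        proof (rule uge)
          fix q assume q: "q \<in> C"
          have "c * u x \<le> c * q x" using ule[OF q] c by simp
          then show "c * u x \<le> q (c *\<^sub>R x)" using homq[OF q] c by simp
        qed
        show ?thesis using 1 2 c by (simp add: divide_le_eq mult.commute antisym)
      qed
    qed
    moreover have "\<forall>x. u x \<le> p x"
    proof
      fix x
      obtain q0 where q0: "q0 \<in> C" using ne by blast
      have "u x \<le> q0 x" by (rule ule[OF q0])
      moreover have "q0 x \<le> p x" using CA q0 unfolding A_def by blast
      ultimately show "u x \<le> p x" by linarith
    qed
    ultimately have uA: "u \<in> A" unfolding A_def by simp
    have "\<forall>a\<in>C. (a, u) \<in> R"
    proof
      fix a assume a: "a \<in> C"
      then have "a \<in> A" using CA by blast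
      moreover have "\<forall>x. u x \<le> a x" using ule[OF a] by blast
      ultimately show "(a, u) \<in> R" unfolding R_def using uA by blast
    qed
    then show ?thesis using uA FR by blast
  qed
  obtain m where m: "m \<in> Field R" and mm: "\<forall>a\<in>Field R. (m, a) \<in> R \<longrightarrow> a = m"
    using Zorns_po_lemma[OF po ub] by blast
  have mA: "m \<in> A" using m FR by simp
  then have msub: "sublin m" and mp: "\<And>x. m x \<le> p x" unfolding A_def by auto
  have "sublin r \<and> (\<forall>x. r x \<le> m x) \<longrightarrow> r = m" for r
  proof
    assume r: "sublin r \<and> (\<forall>x. r x \<le> m x)"
    have "r x \<le> p x" for x
    proof -
      have "r x \<le> m x" using r by blast
      then show ?thesis using mp[of x] by linarith
    qed
    then have rA: "r \<in> A" using r unfolding A_def by blast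
    then have "(m, r) \<in> R" using r mA unfolding R_def by blast
    then show "r = m" using mm rA FR by blast
  qed
  then show ?thesis using msub mp by blast
qed

lemma hahn_banach_real:
  fixes z :: "'a::real_normed_vector"
  shows "\<exists>f. (\<forall>x y. f (x + y) = f x + f y) \<and> (\<forall>c x. f (c *\<^sub>R x) = c * f x) \<and>
             (\<forall>x. \<bar>f x\<bar> \<le> norm x) \<and> f z = norm z"
proof -
  have sn: "sublin (norm :: 'a \<Rightarrow> real)"
    unfolding sublin_def by (simp add: norm_triangle_ineq)
  define p where "p = shiftinf norm z"
  have sp: "sublin p" unfolding p_def by (rule shiftinf_sublin[OF sn])
  obtain m where m: "sublin m" "\<forall>x. m x \<le> p x" "\<forall>r. sublin r \<and> (\<forall>x. r x \<le> m x) \<longrightarrow> r = m"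
    using exists_minimal_sublin[OF sp] by blast
  have add: "m (x + y) = m x + m y" and hom: "m (c *\<^sub>R x) = c * m x" for x y c
    using minimal_sublin_linear[OF m(1)] m(3) by blast+
  have mle: "m x \<le> norm x" for x
    using m(2) shiftinf_below[OF sn, of z x] unfolding p_def by (meson order_trans)
  have "\<bar>m x\<bar> \<le> norm x" for x
    using mle[of x] mle[of "- x"] hom[of "-1" x] by simp
  moreover have "m z = norm z"
  proof -
    have "m (- z) \<le> p (- z)" using m(2) by blast
    also have "\<dots> \<le> norm (- z + 1 *\<^sub>R z) - 1 * norm z" unfolding p_def by (rule shiftinf_le[OF sn]) simp
    finally have "m (- z) \<le> - norm z" by simp
    then show ?thesis using hom[of "-1" z] mle[of z] by simp
  qed
  ultimately show ?thesis using add hom by blast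
qed



locale gset =
  fixes G T :: "'a::real_normed_vector \<Rightarrow> 'b::real_normed_vector"
    and D :: "('b \<Rightarrow> 'k::{real_normed_field,heine_borel,perfect_space}) set"
    and re :: "'k \<Rightarrow> real" and sc :: "'k \<Rightarrow> 'b \<Rightarrow> 'b"
  assumes G_lin: "bounded_linear G" and G_norm: "onorm G = 1" and T_lin: "bounded_linear T"
    and D_bound: "y \<in> D \<Longrightarrow> norm (y v) \<le> norm v"
    and D_add: "y \<in> D \<Longrightarrow> y (u + v) = y u + y v"
    and D_sc: "y \<in> D \<Longrightarrow> y (sc w v) = w * y v"
    and HB: "v \<noteq> 0 \<Longrightarrow> \<exists>y\<in>D. y v = of_real (norm v)"
    and sc_norm: "norm (sc w v) = norm w * norm v"
    and sc_diff: "sc w v - sc w' v = sc (w - w') v"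
    and re_add: "re (a + b) = re a + re b"
    and re_le: "re a \<le> norm a"
    and re_of_real: "re (of_real r) = r"
    and norm_sq: "norm (c - of_real t) ^ 2 = norm c ^ 2 - 2 * t * re c + t ^ 2"
    and sgn_ex: "\<exists>w. norm w = 1 \<and> w * (l::'k) = of_real (norm l)"
begin

definition Aset :: "real \<Rightarrow> 'a set" where
  "Aset \<delta> = {x. norm x = 1 \<and> norm (G x) > 1 - \<delta>}"

definition sp :: "('a \<Rightarrow> 'b) \<Rightarrow> real \<Rightarrow> real" where
  "sp S \<delta> = (SUP x\<in>Aset \<delta>. norm (S x))"

lemma normG_sp: "normG G S = (INF \<delta>\<in>{0<..}. sp S \<delta>)"
  unfolding normG_def sp_def Aset_def by simp

definition Sset :: "real \<Rightarrow> 'k set" where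
  "Sset \<delta> = {y (T x) | x y. norm x = 1 \<and> y \<in> D \<and> re (y (G x)) > 1 - \<delta>}"

definition VG :: "'k set" where "VG = numrange D re G T"

lemma VG_Sset: "VG = (\<Inter>\<delta>\<in>{0<..}. closure (Sset \<delta>))"
  unfolding VG_def numrange_def Sset_def by simp

lemma Aset_mono: "\<delta>1 \<le> \<delta>2 \<Longrightarrow> Aset \<delta>1 \<subseteq> Aset \<delta>2"
  unfolding Aset_def by auto

lemma Sset_mono: "\<delta>1 \<le> \<delta>2 \<Longrightarrow> Sset \<delta>1 \<subseteq> Sset \<delta>2"
  unfolding Sset_def by fastforce

lemma G_le: "norm (G x) \<le> norm x"
  using onorm[OF G_lin, of x] G_norm by simp

lemma T_le: "norm (T x) \<le> onorm T * norm x"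
  using onorm[OF T_lin, of x] by simp

lemma re_neg: "- norm a \<le> re a"
proof -
  have "re a + re (- a) = 0" using re_add[of a "- a"] re_of_real[of 0] by simp
  moreover have "re (- a) \<le> norm a" using re_le[of "- a"] by simp
  ultimately show ?thesis by linarith
qed

lemma Aset_ne: assumes "\<delta> > 0" shows "Aset \<delta> \<noteq> {}"
proof
  assume e: "Aset \<delta> = {}"
  define d where "d = min \<delta> (1/2)"
  have d: "d > 0" "d \<le> 1/2" "d \<le> \<delta>" using assms unfolding d_def by auto
  have "Aset d = {}" using Aset_mono[OF d(3)] e by blast
  then have le: "norm (G x) \<le> 1 - d" if "norm x = 1" for x
    using that unfolding Aset_def by force
  interpret G: bounded_linear G by (rule G_lin)
  have "norm (G x) \<le> (1 - d) * norm x" for x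
  proof (cases "x = 0")
    case True then show ?thesis by simp
  next
    case False
    then have nx: "norm x > 0" by simp
    have "norm (G (inverse (norm x) *\<^sub>R x)) \<le> 1 - d"
      by (rule le) (use False in simp)
    then have "inverse (norm x) * norm (G x) \<le> 1 - d"
      by (simp add: G.scaleR)
    then show ?thesis using nx by (simp add: field_simps)
  qed
  then have "onorm G \<le> 1 - d" by (intro onorm_bound) (use d in auto)
  then show False using G_norm d by simp
qed

context
  fixes S :: "'a \<Rightarrow> 'b" and K :: real
  assumes Sb: "\<And>x. norm x = 1 \<Longrightarrow> norm (S x) \<le> K"
begin

lemma sp_bdd: "bdd_above ((\<lambda>x. norm (S x)) ` Aset \<delta>)"
  by (rule bdd_aboveI2[where M=K]) (use Sb in \<open>auto simp: Aset_def\<close>)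

lemma sp_upper: "x \<in> Aset \<delta> \<Longrightarrow> norm (S x) \<le> sp S \<delta>"
  unfolding sp_def by (rule cSUP_upper[OF _ sp_bdd])

lemma sp_le_K: "\<delta> > 0 \<Longrightarrow> sp S \<delta> \<le> K"
  unfolding sp_def by (rule cSUP_least[OF Aset_ne]) (use Sb in \<open>auto simp: Aset_def\<close>)

lemma sp_nonneg: "\<delta> > 0 \<Longrightarrow> 0 \<le> sp S \<delta>"
proof -
  assume "\<delta> > 0"
  then obtain x where "x \<in> Aset \<delta>" using Aset_ne by blast
  then show ?thesis using sp_upper[of x \<delta>] by (meson norm_ge_zero order_trans)
qed

lemma sp_mono: "0 < \<delta>1 \<Longrightarrow> \<delta>1 \<le> \<delta>2 \<Longrightarrow> sp S \<delta>1 \<le> sp S \<delta>2"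
  unfolding sp_def by (rule cSUP_subset_mono[OF Aset_ne sp_bdd Aset_mono]) auto

lemma sp_approx: "\<delta> > 0 \<Longrightarrow> e > 0 \<Longrightarrow> \<exists>x\<in>Aset \<delta>. sp S \<delta> - e < norm (S x)"
proof -
  assume d: "\<delta> > 0" and e: "e > 0"
  have "sp S \<delta> - e < sp S \<delta>" using e by simp
  then show ?thesis unfolding sp_def using less_cSUP_iff[OF Aset_ne[OF d] sp_bdd] by blast
qed

lemma nG_bdd: "bdd_below (sp S ` {0<..})"
  by (rule bdd_belowI2[where m=0]) (use sp_nonneg in auto)

lemma nG_nonneg: "0 \<le> normG G S"
  unfolding normG_sp by (rule cINF_greatest) (use sp_nonneg in auto)

lemma nG_le_sp: "\<delta> > 0 \<Longrightarrow> normG G S \<le> sp S \<delta>"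
  unfolding normG_sp by (rule cINF_lower[OF nG_bdd]) auto

lemma nG_approx: "e > 0 \<Longrightarrow> \<exists>\<delta>>0. sp S \<delta> < normG G S + e"
proof -
  assume e: "e > 0"
  have "normG G S < normG G S + e" using e by simp
  have ne: "{0<..} \<noteq> ({}::real set)" by auto
  from \<open>normG G S < normG G S + e\<close> have "\<exists>\<delta>\<in>{0<..}. sp S \<delta> < normG G S + e"
    unfolding normG_sp by (subst (asm) cINF_less_iff[OF ne nG_bdd])
  then show ?thesis by auto
qed

lemma nG_ge: "(\<And>\<delta>. \<delta> > 0 \<Longrightarrow> a \<le> sp S \<delta>) \<Longrightarrow> a \<le> normG G S"
  unfolding normG_sp by (rule cINF_greatest) auto

end

abbreviation F :: "'k \<Rightarrow> 'a \<Rightarrow> 'b" where "F w \<equiv> (\<lambda>x. G x + sc w (T x))"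

lemma T_b: "norm x = 1 \<Longrightarrow> norm (T x) \<le> onorm T"
  using T_le[of x] by simp

lemma G_b: "norm x = 1 \<Longrightarrow> norm (G x) \<le> 1"
  using G_le[of x] by simp

lemma F_b: "norm x = 1 \<Longrightarrow> norm (F w x) \<le> 1 + norm w * onorm T"
proof -
  assume x: "norm x = 1"
  have "norm (F w x) \<le> norm (G x) + norm (sc w (T x))" by (rule norm_triangle_ineq)
  also have "\<dots> \<le> 1 + norm w * onorm T"
    using G_b[OF x] mult_left_mono[OF T_b[OF x] norm_ge_zero, of w] by (simp add: sc_norm)
  finally show ?thesis .
qed

lemma upper: assumes w: "norm w = 1" shows "normG G (F w) \<le> 1 + normG G T"
proof -
  have "normG G (F w) - 1 \<le> normG G T"
  proof (rule nG_ge[where S=T and K="onorm T", OF T_b])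
    fix \<delta> :: real assume d: "\<delta> > 0"
    have "sp (F w) \<delta> \<le> 1 + sp T \<delta>"
      unfolding sp_def[of "F w"]
    proof (rule cSUP_least[OF Aset_ne[OF d]])
      fix x assume x: "x \<in> Aset \<delta>"
      have "norm (F w x) \<le> norm (G x) + norm (sc w (T x))" by (rule norm_triangle_ineq)
      also have "\<dots> \<le> 1 + sp T \<delta>"
        using G_b[of x] sp_upper[where S=T and K="onorm T", OF T_b x] x w by (auto simp: sc_norm Aset_def)
      finally show "norm (F w x) \<le> 1 + sp T \<delta>" .
    qed
    then show "normG G (F w) - 1 \<le> sp T \<delta>"
      using nG_le_sp[where S="F w" and K="1 + norm w * onorm T", OF F_b d] by simp
  qed
  then show ?thesis by simp
qed

lemma lip: "normG G (F w) \<le> normG G (F w') + norm (w - w') * onorm T"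
proof -
  have "normG G (F w) - norm (w - w') * onorm T \<le> normG G (F w')"
  proof (rule nG_ge[where S="F w'" and K="1 + norm w' * onorm T", OF F_b])
    fix \<delta> :: real assume d: "\<delta> > 0"
    have "sp (F w) \<delta> \<le> sp (F w') \<delta> + norm (w - w') * onorm T"
      unfolding sp_def[of "F w"]
    proof (rule cSUP_least[OF Aset_ne[OF d]])
      fix x assume x: "x \<in> Aset \<delta>"
      have x1: "norm x = 1" using x unfolding Aset_def by simp
      have "F w x = F w' x + (sc w (T x) - sc w' (T x))" by simp
      also have "\<dots> = F w' x + sc (w - w') (T x)" by (simp add: sc_diff)
      finally have "norm (F w x) \<le> norm (F w' x) + norm (sc (w - w') (T x))"
        by (metis norm_triangle_ineq)
      also have "\<dots> \<le> sp (F w') \<delta> + norm (w - w') * onorm T"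
        using sp_upper[where S="F w'" and K="1 + norm w' * onorm T", OF F_b x] mult_left_mono[OF T_b[OF x1] norm_ge_zero, of "w - w'"]
        by (simp add: sc_norm)
      finally show "norm (F w x) \<le> sp (F w') \<delta> + norm (w - w') * onorm T" .
    qed
    then show "normG G (F w) - norm (w - w') * onorm T \<le> sp (F w') \<delta>"
      using nG_le_sp[where S="F w" and K="1 + norm w * onorm T", OF F_b d] by simp
  qed
  then show ?thesis by simp
qed

lemma attains: "\<exists>w0\<in>sphere 0 1. \<forall>w\<in>sphere 0 1. normG G (F w) \<le> normG G (F w0)"
proof (rule continuous_attains_sup)
  show "compact (sphere (0::'k) 1)" by simp
  show "sphere (0::'k) 1 \<noteq> {}" using norm_one[where 'a='k] by (metis mem_sphere_0 empty_iff)
  show "continuous_on (sphere 0 1) (\<lambda>w. normG G (F w))"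
    unfolding continuous_on_iff
  proof (intro ballI allI impI)
    fix w :: 'k and e :: real assume e: "e > 0"
    show "\<exists>d>0. \<forall>w'\<in>sphere 0 1. dist w' w < d \<longrightarrow> dist (normG G (F w')) (normG G (F w)) < e"
    proof (intro exI[of _ "e / (onorm T + 1)"] conjI ballI impI)
      have oT: "onorm T \<ge> 0" by (rule onorm_pos_le[OF T_lin])
      show "e / (onorm T + 1) > 0" using e oT by simp
      fix w' assume "dist w' w < e / (onorm T + 1)"
      then have dw: "norm (w' - w) * (onorm T + 1) < e" using oT by (simp add: dist_norm field_simps)
      have "norm (w' - w) * onorm T \<le> norm (w' - w) * (onorm T + 1)" by (simp add: mult_left_mono)
      then have k: "norm (w' - w) * onorm T < e" using dw by linarith
      have "normG G (F w') \<le> normG G (F w) + norm (w' - w) * onorm T" by (rule lip)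
      moreover have "normG G (F w) \<le> normG G (F w') + norm (w - w') * onorm T" by (rule lip)
      moreover have "norm (w - w') = norm (w' - w)" by (rule norm_minus_commute)
      ultimately show "dist (normG G (F w')) (normG G (F w)) < e"
        using k by (simp add: dist_real_def abs_less_iff)
    qed
  qed
qed

lemma spT_upper: "x \<in> Aset \<delta> \<Longrightarrow> norm (T x) \<le> sp T \<delta>"
  using sp_upper[where S=T and K="onorm T"] T_b by blast

lemma VG_bound: assumes l: "l \<in> VG" shows "norm l \<le> normG G T" "norm l \<le> onorm T"
proof -
  have sub: "Sset \<delta> \<subseteq> cball 0 (sp T \<delta>)" for \<delta>
  proof
    fix s assume "s \<in> Sset \<delta>"
    then obtain x y where s: "s = y (T x)" "norm x = 1" "y \<in> D" "re (y (G x)) > 1 - \<delta>"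
      unfolding Sset_def by blast
    have "norm (G x) > 1 - \<delta>" using re_le[of "y (G x)"] D_bound[OF s(3), of "G x"] s(4) by linarith
    then have "x \<in> Aset \<delta>" using s(2) unfolding Aset_def by simp
    then have "norm (T x) \<le> sp T \<delta>" by (rule spT_upper)
    then show "s \<in> cball 0 (sp T \<delta>)" using D_bound[OF s(3), of "T x"] s(1) by simp
  qed
  have ld: "norm l \<le> sp T \<delta>" if "\<delta> > 0" for \<delta>
  proof -
    have "l \<in> closure (Sset \<delta>)" using l that unfolding VG_Sset by blast
    then have "l \<in> cball 0 (sp T \<delta>)" using closure_minimal[OF sub closed_cball] by blast
    then show ?thesis by simp
  qed
  show "norm l \<le> normG G T"
  proof (rule nG_ge[where S=T and K="onorm T", OF T_b])
    fix \<delta> :: real assume "\<delta> > 0" then show "norm l \<le> sp T \<delta>" by (rule ld)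
  qed
  show "norm l \<le> onorm T" using ld[of 1] sp_le_K[where S=T and K="onorm T", OF T_b, of 1] by simp
qed

lemma VG_ne: "VG \<noteq> {}"
proof -
  define Fn where "Fn n = closure (Sset (1 / (real n + 1)))" for n :: nat
  have bnd: "Sset \<delta> \<subseteq> cball 0 (onorm T)" for \<delta>
  proof
    fix s assume "s \<in> Sset \<delta>"
    then obtain x y where s: "s = y (T x)" "norm x = 1" "y \<in> D"
      unfolding Sset_def by blast
    then show "s \<in> cball 0 (onorm T)" using D_bound[OF s(3), of "T x"] T_b[OF s(2)] by simp
  qed
  have "\<Inter>(range Fn) \<noteq> {}"
  proof (rule compact_nest)
    show "compact (Fn n)" for n
      unfolding Fn_def compact_closure by (rule bounded_subset[OF bounded_cball bnd])
    show "Fn n \<noteq> {}" for n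
    proof -
      let ?d = "1 / (real n + 1)"
      have d: "?d > 0" "?d \<le> 1" by auto
      obtain x where x: "x \<in> Aset ?d" using Aset_ne[OF d(1)] by blast
      then have x1: "norm x = 1" and gx: "norm (G x) > 1 - ?d" unfolding Aset_def by auto
      then have "G x \<noteq> 0" using d by auto
      then obtain y where y: "y \<in> D" "y (G x) = of_real (norm (G x))" using HB by blast
      have "re (y (G x)) > 1 - ?d" using y(2) gx re_of_real by simp
      then have "y (T x) \<in> Sset ?d" unfolding Sset_def mem_Collect_eq
        by (intro exI[of _ x] exI[of _ y]) (use x1 y(1) in simp)
      then show ?thesis unfolding Fn_def using closure_subset by blast
    qed
    show "Fn n \<subseteq> Fn m" if "m \<le> n" for m n
    proof -
      have "1 / (real n + 1) \<le> 1 / (real m + 1)" using that by (simp add: field_simps)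
      then show ?thesis unfolding Fn_def by (rule closure_mono[OF Sset_mono])
    qed
  qed
  then obtain l where l: "\<forall>n. l \<in> Fn n" by blast
  have "l \<in> VG" unfolding VG_Sset
  proof
    fix \<delta> :: real assume "\<delta> \<in> {0<..}"
    then obtain n where n: "inverse (real (Suc n)) < \<delta>" using reals_Archimedean by auto
    have "Fn n \<subseteq> closure (Sset \<delta>)" unfolding Fn_def
      by (rule closure_mono, rule Sset_mono) (use n in \<open>simp add: inverse_eq_divide add.commute\<close>)
    then show "l \<in> closure (Sset \<delta>)" using l by blast
  qed
  then show ?thesis by blast
qed

lemma lower: assumes l: "l \<in> VG" and w: "norm w = 1" "w * l = of_real (norm l)"
  shows "1 + norm l \<le> normG G (F w)"
proof (rule nG_ge[where S="F w" and K="1 + norm w * onorm T", OF F_b])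
  fix \<delta> :: real assume d: "\<delta> > 0"
  show "1 + norm l \<le> sp (F w) \<delta>"
  proof (rule field_le_epsilon)
    fix e :: real assume e: "e > 0"
    define d' where "d' = min \<delta> (e/2)"
    have d': "d' > 0" "d' \<le> \<delta>" "d' \<le> e/2" using d e unfolding d'_def by auto
    have "l \<in> closure (Sset d')" using l d' unfolding VG_Sset by blast
    moreover have "e / 2 > 0" using e by simp
    ultimately obtain s where s: "s \<in> Sset d'" "dist s l < e/2" unfolding closure_approachable by blast
    then obtain x y where xy: "s = y (T x)" "norm x = 1" "y \<in> D" "re (y (G x)) > 1 - d'"
      unfolding Sset_def by blast
    have "norm (G x) > 1 - d'" using re_le[of "y (G x)"] D_bound[OF xy(3), of "G x"] xy(4) by linarith
    then have xA: "x \<in> Aset \<delta>" using xy(2) d' unfolding Aset_def by auto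
    have "y (F w x) = y (G x) + w * y (T x)" using D_add[OF xy(3)] D_sc[OF xy(3)] by simp
    then have r1: "re (y (F w x)) = re (y (G x)) + re (w * y (T x))" using re_add by simp
    have "w * y (T x) = of_real (norm l) + w * (y (T x) - l)" using w(2) by (simp add: algebra_simps)
    then have r2: "re (w * y (T x)) = norm l + re (w * (y (T x) - l))" using re_add re_of_real by simp
    have r3: "re (w * (y (T x) - l)) \<ge> - (e/2)"
    proof -
      have "norm (w * (y (T x) - l)) = dist s l" using xy(1) w(1) by (simp add: norm_mult dist_norm)
      then show ?thesis using re_neg[of "w * (y (T x) - l)"] s(2) by linarith
    qed
    have r4: "re (y (F w x)) \<le> norm (F w x)"
      using re_le[of "y (F w x)"] D_bound[OF xy(3), of "F w x"] by linarith
    have r5: "norm (F w x) \<le> sp (F w) \<delta>"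
      by (rule sp_upper[where S="F w" and K="1 + norm w * onorm T", OF F_b xA])
    show "1 + norm l \<le> sp (F w) \<delta> + e" using r1 r2 r3 r4 r5 xy(4) d'(3) by linarith
  qed
qed

lemma attain_nu: assumes w0: "norm w0 = 1" and eq: "normG G (F w0) = 1 + normG G T"
  shows "\<exists>l\<in>VG. norm l = normG G T"
proof -
  define t where "t = normG G T"
  have t0: "t \<ge> 0" unfolding t_def by (rule nG_nonneg[where S=T and K="onorm T", OF T_b])
  have w0ne: "w0 \<noteq> 0" using w0 by auto
  define L where "L = of_real t / w0"
  have nL: "norm L = t" unfolding L_def using w0 t0 by (simp add: norm_divide)
  have "L \<in> VG" unfolding VG_Sset
  proof
    fix \<delta> :: real assume "\<delta> \<in> {0<..}" then have d: "\<delta> > 0" by simp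
    show "L \<in> closure (Sset \<delta>)" unfolding closure_approachable
    proof (intro allI impI)
      fix e :: real assume e: "e > 0"
      define \<epsilon> where "\<epsilon> = min (\<delta>/2) (min 1 (e^2 / (4*t+2)))"
      have \<epsilon>0: "\<epsilon> > 0" using d e t0 unfolding \<epsilon>_def by simp
      have \<epsilon>1: "\<epsilon> \<le> \<delta>/2" unfolding \<epsilon>_def by (rule min.cobounded1)
      have \<epsilon>2: "\<epsilon> \<le> 1" unfolding \<epsilon>_def by (rule min.coboundedI2, rule min.cobounded1)
      have \<epsilon>3: "\<epsilon> \<le> e^2/(4*t+2)" unfolding \<epsilon>_def by (rule min.coboundedI2, rule min.cobounded2)
      note \<epsilon> = \<epsilon>0 \<epsilon>1 \<epsilon>2 \<epsilon>3
      obtain \<delta>1 where \<delta>1: "\<delta>1 > 0" "sp T \<delta>1 < t + \<epsilon>"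
        using nG_approx[where S=T and K="onorm T", OF T_b \<epsilon>(1)] unfolding t_def by blast
      define \<delta>2 where "\<delta>2 = min \<delta>1 \<epsilon>"
      have \<delta>2: "\<delta>2 > 0" "\<delta>2 \<le> \<delta>1" using \<delta>1 \<epsilon> unfolding \<delta>2_def by auto
      obtain x where xA: "x \<in> Aset \<delta>2" and xF: "sp (F w0) \<delta>2 - \<epsilon> < norm (F w0 x)"
        using sp_approx[where S="F w0" and K="1 + norm w0 * onorm T", OF F_b \<delta>2(1) \<epsilon>(1)] by blast
      have x1: "norm x = 1" using xA unfolding Aset_def by simp
      have "normG G (F w0) \<le> sp (F w0) \<delta>2"
        by (rule nG_le_sp[where S="F w0" and K="1 + norm w0 * onorm T", OF F_b \<delta>2(1)])
      then have Nbig: "norm (F w0 x) > 1 + t - \<epsilon>" using xF eq unfolding t_def by linarith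
      then have "F w0 x \<noteq> 0" using t0 \<epsilon> by auto
      then obtain y where y: "y \<in> D" "y (F w0 x) = of_real (norm (F w0 x))" using HB by blast
      define a where "a = y (G x)"
      define b where "b = y (T x)"
      have yF: "y (F w0 x) = a + w0 * b" unfolding a_def b_def using D_add[OF y(1)] D_sc[OF y(1)] by simp
      have "norm (F w0 x) = re (y (F w0 x))" using y(2) re_of_real by simp
      also have "\<dots> = re a + re (w0 * b)" using yF re_add by simp
      finally have resum: "re a + re (w0 * b) = norm (F w0 x)" by simp
      have ra: "re a \<le> 1" using re_le[of a] D_bound[OF y(1), of "G x"] G_b[OF x1] unfolding a_def by linarith
      have nb: "norm (w0 * b) < t + \<epsilon>"
      proof -
        have "norm (w0 * b) = norm b" using w0 by (simp add: norm_mult)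
        also have "\<dots> \<le> norm (T x)" unfolding b_def by (rule D_bound[OF y(1)])
        also have "\<dots> \<le> sp T \<delta>2" by (rule sp_upper[where S=T and K="onorm T", OF T_b xA])
        also have "\<dots> \<le> sp T \<delta>1" by (rule sp_mono[where S=T and K="onorm T", OF T_b \<delta>2(1) \<delta>2(2)])
        finally show ?thesis using \<delta>1(2) by linarith
      qed
      have rb: "re (w0 * b) \<le> norm (w0 * b)" by (rule re_le)
      have are: "re a > 1 - \<delta>" using resum Nbig nb rb \<epsilon>(2) by linarith
      have bS: "b \<in> Sset \<delta>" unfolding Sset_def mem_Collect_eq
        by (intro exI[of _ x] exI[of _ y]) (use x1 y(1) are in \<open>simp add: a_def b_def\<close>)
      have rc: "re (w0 * b) > t - \<epsilon>" using resum Nbig ra by linarith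
      define c where "c = w0 * b"
      have "norm (c - of_real t) ^ 2 = norm c ^ 2 - 2 * t * re c + t ^ 2" by (rule norm_sq)
      also have "\<dots> \<le> (t + \<epsilon>)^2 - 2 * t * (t - \<epsilon>) + t^2"
      proof -
        have "norm c ^ 2 \<le> (t + \<epsilon>)^2" using nb unfolding c_def by (intro power_mono) auto
        moreover have "2 * t * (t - \<epsilon>) \<le> 2 * t * re c" using rc t0 unfolding c_def
          by (intro mult_left_mono) auto
        ultimately show ?thesis by linarith
      qed
      also have "\<dots> = 4 * t * \<epsilon> + \<epsilon>^2" by (simp add: power2_eq_square algebra_simps)
      also have "\<dots> \<le> (4 * t + 1) * \<epsilon>"
      proof -
        have "\<epsilon> * \<epsilon> \<le> 1 * \<epsilon>" using \<epsilon> by (intro mult_right_mono) auto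
        then show ?thesis by (simp add: power2_eq_square algebra_simps)
      qed
      also have "\<dots> < e^2"
      proof -
        have "(4*t+1) * \<epsilon> \<le> (4*t+1) * (e^2/(4*t+2))" using \<epsilon>(4) t0 by (intro mult_left_mono) auto
        also have "\<dots> = e^2 * ((4*t+1)/(4*t+2))" by simp
        also have "\<dots> < e^2 * 1"
        proof (rule mult_strict_left_mono)
          show "(4*t+1)/(4*t+2) < 1" using t0 by simp
          show "0 < e^2" using e by simp
        qed
        finally show ?thesis by simp
      qed
      finally have "norm (c - of_real t) < e"
        by (rule power_less_imp_less_base[OF _ less_imp_le[OF e]])
      moreover have "dist b L = norm (c - of_real t)"
      proof -
        have "b - L = (c - of_real t) / w0" unfolding c_def L_def using w0ne by (simp add: field_simps)
        then show ?thesis using w0 by (simp add: dist_norm norm_divide)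
      qed
      ultimately have "dist b L < e" by simp
      then show "\<exists>s\<in>Sset \<delta>. dist s L < e" using bS by blast
    qed
  qed
  then show ?thesis using nL unfolding t_def by blast
qed

theorem main:
  "Sup ((\<lambda>w. normG G (F w)) ` sphere 0 1) = 1 + normG G T \<longleftrightarrow> Sup (norm ` VG) = normG G T"
proof -
  obtain w0 where w0: "w0 \<in> sphere 0 1" and mx: "\<forall>w\<in>sphere 0 1. normG G (F w) \<le> normG G (F w0)"
    using attains by blast
  have supf: "Sup ((\<lambda>w. normG G (F w)) ` sphere 0 1) = normG G (F w0)"
    by (rule cSup_eq_maximum) (use w0 mx in auto)
  have bdd: "bdd_above (norm ` VG)"
    by (rule bdd_aboveI2[where M="onorm T"]) (use VG_bound in auto)
  have ne: "norm ` VG \<noteq> {}" using VG_ne by blast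
  have nu1: "Sup (norm ` VG) \<le> normG G T"
    by (rule cSup_least[OF ne]) (use VG_bound in auto)
  have nu2: "Sup (norm ` VG) \<le> normG G (F w0) - 1"
  proof (rule cSup_least[OF ne])
    fix r assume "r \<in> norm ` VG"
    then obtain l where l: "l \<in> VG" "r = norm l" by blast
    obtain w where w: "norm w = 1" "w * l = of_real (norm l)" using sgn_ex by blast
    have "1 + norm l \<le> normG G (F w)" by (rule lower[OF l(1) w])
    also have "\<dots> \<le> normG G (F w0)" using mx w(1) by simp
    finally show "r \<le> normG G (F w0) - 1" using l by simp
  qed
  have up: "normG G (F w0) \<le> 1 + normG G T" using upper w0 by simp
  show ?thesis unfolding supf
  proof
    assume eq: "normG G (F w0) = 1 + normG G T"
    obtain l where l: "l \<in> VG" "norm l = normG G T" using attain_nu[OF _ eq] w0 by auto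
    have "norm l \<le> Sup (norm ` VG)" by (rule cSup_upper[OF image_eqI[OF refl l(1)] bdd])
    then show "Sup (norm ` VG) = normG G T" using nu1 l by simp
  next
    assume "Sup (norm ` VG) = normG G T"
    then show "normG G (F w0) = 1 + normG G T" using nu2 up by simp
  qed
qed

end


lemma real_HB:
  fixes v :: "'b::real_normed_vector"
  assumes "v \<noteq> 0"
  shows "\<exists>y\<in>rdual_sphere. y v = of_real (norm v)"
proof -
  obtain f where f: "\<forall>x y. f (x + y) = f x + f y" "\<forall>c x. f (c *\<^sub>R x) = c * f x"
      "\<forall>x. \<bar>f x\<bar> \<le> norm x" "f v = norm v"
    using hahn_banach_real by blast
  have bl: "bounded_linear f" by (rule bounded_linear_intro[where K=1]) (use f in auto)
  have "onorm f \<le> 1" by (rule onorm_bound) (use f in auto)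
  moreover have "norm v \<le> onorm f * norm v" using onorm[OF bl, of v] f(4) by simp
  then have "1 \<le> onorm f" using assms by simp
  ultimately have "onorm f = 1" by simp
  then show ?thesis using bl f(4) unfolding rdual_sphere_def by auto
qed

lemma real_case:
  fixes G T :: "'a::real_normed_vector \<Rightarrow> 'b::real_normed_vector"
  assumes G: "bounded_linear G" "onorm G = 1" and T: "bounded_linear T"
  shows "(Sup ((\<lambda>\<omega>. normG G (\<lambda>x. G x + \<omega> *\<^sub>R T x)) ` {\<omega>::real. \<bar>\<omega>\<bar> = 1}) = 1 + normG G T)
        \<longleftrightarrow> nuG_real G T = normG G T"
proof -
  interpret I: gset G T rdual_sphere "\<lambda>r::real. r" scaleR
  proof (rule gset.intro)
    show "bounded_linear G" "onorm G = 1" "bounded_linear T" by (fact G(1), fact G(2), fact T)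
    fix y :: "'b \<Rightarrow> real" and u v :: 'b and w w' :: real and a b c t r l :: real
    show "y \<in> rdual_sphere \<Longrightarrow> norm (y v) \<le> norm v"
      unfolding rdual_sphere_def using onorm[of y v] by auto
    show "y \<in> rdual_sphere \<Longrightarrow> y (u + v) = y u + y v"
      unfolding rdual_sphere_def by (auto intro: linear_add[OF bounded_linear.linear])
    show "y \<in> rdual_sphere \<Longrightarrow> y (w *\<^sub>R v) = w * y v"
      unfolding rdual_sphere_def using linear_scale[OF bounded_linear.linear] by fastforce
    show "v \<noteq> 0 \<Longrightarrow> \<exists>y\<in>rdual_sphere. y v = of_real (norm v)" by (rule real_HB)
    show "norm (w *\<^sub>R v) = norm w * norm v" by simp
    show "w *\<^sub>R v - w' *\<^sub>R v = (w - w') *\<^sub>R v" by (simp add: scaleR_diff_left)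
    show "a + b = a + b" by simp
    show "a \<le> norm a" by simp
    show "of_real r = r" by simp
    show "norm (c - of_real t) ^ 2 = norm c ^ 2 - 2 * t * c + t ^ 2"
      by (simp add: power2_eq_square algebra_simps)
    show "\<exists>w. norm w = 1 \<and> w * l = of_real (norm l)"
      by (rule exI[of _ "if l \<ge> 0 then 1 else -1"]) auto
  qed
  have sph: "{\<omega>::real. \<bar>\<omega>\<bar> = 1} = sphere 0 1" by auto
  have nrm: "(abs :: real \<Rightarrow> real) = norm" by (rule ext) simp
  have vg: "VG_real G T = I.VG" unfolding VG_real_def I.VG_def by simp
  show ?thesis unfolding sph unfolding nuG_real_def vg nrm by (rule I.main)
qed



lemma sC_real: "scaleC (complex_of_real r) (x::'a::complex_vector_sp) = r *\<^sub>R x"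
  by (simp add: scaleR_scaleC)

lemma sCi_scaleR: "scaleC \<i> (r *\<^sub>R (x::'a::complex_vector_sp)) = r *\<^sub>R scaleC \<i> x"
  by (simp add: scaleR_scaleC scaleC_scaleC mult.commute)

lemma sCii: "scaleC \<i> (scaleC \<i> (x::'a::complex_vector_sp)) = - x"
proof -
  have "scaleC \<i> (scaleC \<i> x) = scaleC (complex_of_real (-1)) x" by (simp add: scaleC_scaleC)
  also have "\<dots> = (-1) *\<^sub>R x" by (rule sC_real)
  finally show ?thesis by simp
qed

lemma sC_decomp: "scaleC c (x::'a::complex_vector_sp) = Re c *\<^sub>R x + Im c *\<^sub>R scaleC \<i> x"
proof -
  have "Re c *\<^sub>R x + Im c *\<^sub>R scaleC \<i> x = scaleC (complex_of_real (Re c)) x + scaleC (complex_of_real (Im c) * \<i>) x"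
    by (simp add: scaleR_scaleC scaleC_scaleC)
  also have "\<dots> = scaleC (complex_of_real (Re c) + complex_of_real (Im c) * \<i>) x"
    by (simp add: scaleC_add_left)
  also have "complex_of_real (Re c) + complex_of_real (Im c) * \<i> = c"
    by (simp add: complex_eq_iff)
  finally show ?thesis by simp
qed

lemma complex_HB:
  fixes v :: "'d::complex_normed_vector_sp"
  assumes v: "v \<noteq> 0"
  shows "\<exists>y\<in>cdual_sphere. y v = of_real (norm v)"
proof -
  obtain g :: "'d \<Rightarrow> real" where g: "\<forall>x y. g (x + y) = g x + g y" "\<forall>c x. g (c *\<^sub>R x) = c * g x"
      "\<forall>x. \<bar>g x\<bar> \<le> norm x" "g v = norm v"
    using hahn_banach_real by blast
  have gneg: "g (- x) = - g x" for x using g(2)[rule_format, of "-1" x] by simp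
  define f where "f x = complex_of_real (g x) - \<i> * complex_of_real (g (scaleC \<i> x))" for x
  have fadd: "f (x + y) = f x + f y" for x y
    unfolding f_def by (simp add: scaleC_add_right g(1) algebra_simps)
  have fR: "f (r *\<^sub>R x) = complex_of_real r * f x" for r x
    unfolding f_def by (simp add: sCi_scaleR g(2) algebra_simps)
  have fi: "f (scaleC \<i> x) = \<i> * f x" for x
    unfolding f_def by (simp add: sCii gneg algebra_simps)
  have fC: "f (scaleC c x) = c * f x" for c x
  proof -
    have "f (scaleC c x) = complex_of_real (Re c) * f x + complex_of_real (Im c) * (\<i> * f x)"
      unfolding sC_decomp[of c x] by (simp add: fadd fR fi)
    also have "\<dots> = (complex_of_real (Re c) + \<i> * complex_of_real (Im c)) * f x"
      by (simp add: algebra_simps)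
    also have "complex_of_real (Re c) + \<i> * complex_of_real (Im c) = c"
      by (simp add: complex_eq_iff)
    finally show ?thesis .
  qed
  have Ref: "Re (f x) = g x" for x unfolding f_def by simp
  have fb: "cmod (f x) \<le> norm x" for x
  proof (cases "f x = 0")
    case True then show ?thesis by simp
  next
    case False
    define c where "c = cnj (f x) / complex_of_real (cmod (f x))"
    have c1: "cmod c = 1" unfolding c_def using False by (simp add: norm_divide)
    have cf: "c * f x = complex_of_real (cmod (f x))"
    proof -
      have "c * f x = (f x * cnj (f x)) / complex_of_real (cmod (f x))" unfolding c_def by (simp add: algebra_simps)
      also have "f x * cnj (f x) = complex_of_real ((cmod (f x))^2)" by (rule complex_norm_square[symmetric])
      also have "\<dots> / complex_of_real (cmod (f x)) = complex_of_real (cmod (f x))"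
        using False by (simp add: power2_eq_square)
      finally show ?thesis .
    qed
    have "cmod (f x) = Re (c * f x)" using cf by simp
    also have "\<dots> = g (scaleC c x)" using fC[of c x] Ref[of "scaleC c x"] by simp
    also have "\<dots> \<le> norm (scaleC c x)" using g(3) by (meson abs_le_D1)
    also have "\<dots> = norm x" using c1 by (simp add: norm_scaleC)
    finally show ?thesis .
  qed
  have bl: "bounded_linear f"
    by (rule bounded_linear_intro[where K=1]) (use fadd fR fb in \<open>auto simp: scaleR_conv_of_real\<close>)
  have fv: "f v = complex_of_real (norm v)"
  proof -
    have "(Re (f v))^2 + (Im (f v))^2 = (cmod (f v))^2" by (simp add: cmod_power2)
    also have "\<dots> \<le> (norm v)^2" using fb[of v] by (intro power_mono) auto
    finally have "(Im (f v))^2 \<le> 0" using Ref[of v] g(4) by simp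
    then have "Im (f v) = 0" by simp
    then show ?thesis using Ref[of v] g(4) by (simp add: complex_eq_iff)
  qed
  have "onorm f \<le> 1" by (rule onorm_bound) (use fb in auto)
  moreover have "norm v \<le> onorm f * norm v" using onorm[OF bl, of v] fv by simp
  then have "1 \<le> onorm f" using v by simp
  ultimately have "onorm f = 1" by simp
  then show ?thesis using bl fC fv unfolding cdual_sphere_def by auto
qed

lemma complex_case:
  fixes G T :: "'c::complex_normed_vector_sp \<Rightarrow> 'd::complex_normed_vector_sp"
  assumes G: "cbounded_linear G" "onorm G = 1" and T: "cbounded_linear T"
  shows "(Sup ((\<lambda>\<omega>. normG G (\<lambda>x. G x + scaleC \<omega> (T x))) ` {\<omega>::complex. cmod \<omega> = 1}) = 1 + normG G T)
        \<longleftrightarrow> nuG_complex G T = normG G T"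
proof -
  interpret I: gset G T cdual_sphere Re scaleC
  proof (rule gset.intro)
    show "bounded_linear G" "onorm G = 1" "bounded_linear T"
      using G T unfolding cbounded_linear_def by auto
    fix y :: "'d \<Rightarrow> complex" and u v :: 'd and w w' a b c l :: complex and t r :: real
    show "y \<in> cdual_sphere \<Longrightarrow> norm (y v) \<le> norm v"
      unfolding cdual_sphere_def using onorm[of y v] by auto
    show "y \<in> cdual_sphere \<Longrightarrow> y (u + v) = y u + y v"
      unfolding cdual_sphere_def by (auto intro: linear_add[OF bounded_linear.linear])
    show "y \<in> cdual_sphere \<Longrightarrow> y (scaleC w v) = w * y v"
      unfolding cdual_sphere_def by auto
    show "v \<noteq> 0 \<Longrightarrow> \<exists>y\<in>cdual_sphere. y v = of_real (norm v)" by (rule complex_HB)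
    show "norm (scaleC w v) = norm w * norm v" by (rule norm_scaleC)
    have "scaleC w v = scaleC (w - w') v + scaleC w' v" using scaleC_add_left[of "w - w'" w' v] by simp
    then show "scaleC w v - scaleC w' v = scaleC (w - w') v" by (simp add: diff_eq_eq)
    show "Re (a + b) = Re a + Re b" by simp
    show "Re a \<le> norm a" by (rule complex_Re_le_cmod)
    show "Re (of_real r) = r" by simp
    show "norm (c - of_real t) ^ 2 = norm c ^ 2 - 2 * t * Re c + t ^ 2"
      unfolding cmod_power2 by (simp add: power2_eq_square algebra_simps)
    show "\<exists>w. norm w = 1 \<and> w * l = of_real (norm l)"
    proof (cases "l = 0")
      case True then show ?thesis by (intro exI[of _ 1]) simp
    next
      case False
      have "cnj l / complex_of_real (cmod l) * l = (l * cnj l) / complex_of_real (cmod l)"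
        by (simp add: algebra_simps)
      also have "l * cnj l = complex_of_real ((cmod l)^2)" by (rule complex_norm_square[symmetric])
      also have "\<dots> / complex_of_real (cmod l) = complex_of_real (cmod l)"
        using False by (simp add: power2_eq_square)
      finally show ?thesis using False
        by (intro exI[of _ "cnj l / complex_of_real (cmod l)"]) (simp add: norm_divide)
    qed
  qed
  have sph: "{\<omega>::complex. cmod \<omega> = 1} = sphere 0 1" by auto
  have vg: "VG_complex G T = I.VG" unfolding VG_complex_def I.VG_def by simp
  show ?thesis unfolding sph unfolding nuG_complex_def vg by (rule I.main)
qed


theorem theorem3p1:
  shows
  "(\<forall>(G::'a::banach \<Rightarrow> 'b::banach) T.
      bounded_linear G \<and> onorm G = 1 \<and>
      (\<forall>S::'a \<Rightarrow> 'b. bounded_linear S \<and> normG G S = 0 \<longrightarrow> S = (\<lambda>x. 0)) \<and>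
      bounded_linear T \<longrightarrow>
      ((Sup ((\<lambda>\<omega>. normG G (\<lambda>x. G x + \<omega> *\<^sub>R T x)) ` {\<omega>::real. \<bar>\<omega>\<bar> = 1}) = 1 + normG G T)
        \<longleftrightarrow> nuG_real G T = normG G T))
   \<and>
   (\<forall>(G::'c::complex_banach_sp \<Rightarrow> 'd::complex_banach_sp) T.
      cbounded_linear G \<and> onorm G = 1 \<and>
      (\<forall>S::'c \<Rightarrow> 'd. cbounded_linear S \<and> normG G S = 0 \<longrightarrow> S = (\<lambda>x. 0)) \<and>
      cbounded_linear T \<longrightarrow>
      ((Sup ((\<lambda>\<omega>. normG G (\<lambda>x. G x + scaleC \<omega> (T x))) ` {\<omega>::complex. cmod \<omega> = 1}) = 1 + normG G T)
        \<longleftrightarrow> nuG_complex G T = normG G T))"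
proof (intro conjI allI impI)
  fix G :: "'a::banach \<Rightarrow> 'b::banach" and T :: "'a \<Rightarrow> 'b"
  assume "bounded_linear G \<and> onorm G = 1 \<and>
      (\<forall>S::'a \<Rightarrow> 'b. bounded_linear S \<and> normG G S = 0 \<longrightarrow> S = (\<lambda>x. 0)) \<and> bounded_linear T"
  then show "(Sup ((\<lambda>\<omega>. normG G (\<lambda>x. G x + \<omega> *\<^sub>R T x)) ` {\<omega>::real. \<bar>\<omega>\<bar> = 1}) = 1 + normG G T)
        \<longleftrightarrow> nuG_real G T = normG G T"
    using real_case[of G T] by blast
next
  fix G :: "'c::complex_banach_sp \<Rightarrow> 'd::complex_banach_sp" and T :: "'c \<Rightarrow> 'd"
  assume "cbounded_linear G \<and> onorm G = 1 \<and>
      (\<forall>S::'c \<Rightarrow> 'd. cbounded_linear S \<and> normG G S = 0 \<longrightarrow> S = (\<lambda>x. 0)) \<and> cbounded_linear T"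
  then show "(Sup ((\<lambda>\<omega>. normG G (\<lambda>x. G x + scaleC \<omega> (T x))) ` {\<omega>::complex. cmod \<omega> = 1}) = 1 + normG G T)
        \<longleftrightarrow> nuG_complex G T = normG G T"
    using complex_case[of G T] by blast
qed

end
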